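(* Let $a,b,c,y$ be real numbers with $c<b$, $0<b$, $y>0$ and $b<y^2<a$. Then \[ \int_{\sqrt{b}}^{y}\frac{\mathrm{d}u}{u\sqrt{(a-u^2)(u^2-b)(u^2-c)}} =\frac{1}{b}\sqrt{\frac{y^2-b}{(a-b)(b-c)}}\;\mathrm{F}_{D}^{(3)}\left(\tfrac12;1,\tfrac12,\tfrac12;\tfrac32;\ -\frac{y^2-b}{b},\,\frac{y^2-b}{a-b},\,-\frac{y^2-b}{b-c}\right). \]
   Context: For $n\ge1$, the Lauricella hypergeometric function of $n$ variables is \[ \mathrm{F}_{D}^{(n)}(a;b_1,\dots,b_n;c;x_1,\dots,x_n)=\sum_{m_1,\dots,m_n\ge0}\frac{(a)_{m_1+\cdots+m_n}(b_1)_{m_1}\cdots(b_n)_{m_n}}{(c)_{m_1+\cdots+m_n}\,m_1!\cdots m_n!}\,x_1^{m_1}\cdots x_n^{m_n},\qquad |x_i|<1, \] where $(\lambda)_m=\Gamma(\lambda+m)/\Gamma(\lambda)$ is the Pochhammer symbol; for $\operatorname{Re}c>\operatorname{Re}a>0$ it equals $\frac{\Gamma(c)}{\Gamma(a)\Gamma(c-a)}\int_0^1 u^{a-1}(1-u)^{c-a-1}\prod_{i=1}^n(1-x_iu)^{-b_i}\,\mathrm{d}u$, which gives its analytic continuation to $x_i\notin[1,\infty)$. *)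

theory Defs
  imports "HOL-Analysis.Analysis"
begin

text \<open>Lauricella function F_D^(n) with parameters aa, bs i (i < n), cc and real
  arguments xs i (i < n), given by its Euler integral representation
  (valid for c > a > 0 and real arguments x_i < 1); this is the analytic
  continuation of the defining power series used in the paper.\<close>
definition lauricella_FD ::
  "nat \<Rightarrow> real \<Rightarrow> (nat \<Rightarrow> real) \<Rightarrow> real \<Rightarrow> (nat \<Rightarrow> real) \<Rightarrow> real" where
  "lauricella_FD n aa bs cc xs =
     Gamma cc / (Gamma aa * Gamma (cc - aa)) *
     integral {0..1} (\<lambda>u. u powr (aa - 1) * (1 - u) powr (cc - aa - 1) *
        (\<Prod>i<n. (1 - xs i * u) powr (- bs i)))"

end

theory Submission
  imports Defs
begin

theorem mainTheorem4:
  fixes a b c y :: real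
  assumes "c < b" and "0 < b" and "y > 0" and "b < y\<^sup>2" and "y\<^sup>2 < a"
  shows "((\<lambda>u. 1 / (u * sqrt ((a - u\<^sup>2) * (u\<^sup>2 - b) * (u\<^sup>2 - c)))) has_integral
           (1 / b * sqrt ((y\<^sup>2 - b) / ((a - b) * (b - c))) *
            lauricella_FD 3 (1/2) (\<lambda>i. [1, 1/2, 1/2] ! i) (3/2)
              (\<lambda>i. [- (y\<^sup>2 - b) / b, (y\<^sup>2 - b) / (a - b), - (y\<^sup>2 - b) / (b - c)] ! i)))
         {sqrt b..y}"
proof -
  define d where "d = y\<^sup>2 - b"
  define A where "A = a - b"
  define B where "B = b - c"
  have d: "d > 0" and A: "A > 0" and B: "B > 0" and dA: "d < A"
    using assms by (auto simp: d_def A_def B_def)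
  define f where "f = (\<lambda>u. 1 / (u * sqrt ((a - u\<^sup>2) * (u\<^sup>2 - b) * (u\<^sup>2 - c))))"
  define h where "h = (\<lambda>s::real. sqrt d / ((b + d * s\<^sup>2) * sqrt (A - d * s\<^sup>2) * sqrt (B + d * s\<^sup>2)))"
  have pos1: "b + d * s\<^sup>2 > 0" for s using d assms(2) by (simp add: add_pos_nonneg)
  have pos3: "B + d * s\<^sup>2 > 0" for s using d B by (simp add: add_pos_nonneg)
  have pos2: "A - d * s\<^sup>2 > 0" if "s \<in> {0..1}" for s
  proof -
    have "s\<^sup>2 \<le> 1" using that by (simp add: power_le_one)
    hence "d * s\<^sup>2 \<le> d" using d by (simp add: mult_left_le)
    thus ?thesis using dA by linarith
  qed
  have hcont: "continuous_on {0..1} h"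
    unfolding h_def
    by (intro continuous_intros) (use pos1 pos2 pos3 in \<open>auto simp: less_imp_neq[symmetric]\<close>)
  define Ih where "Ih = integral {0..1} h"
  have habs: "h absolutely_integrable_on {0..1}"
    by (rule absolutely_integrable_continuous_real[OF hcont])
  define g where "g = (\<lambda>s::real. sqrt (b + d * s\<^sup>2))"
  define g' where "g' = (\<lambda>s::real. d * s / sqrt (b + d * s\<^sup>2))"
  have gsq: "(g s)\<^sup>2 = b + d * s\<^sup>2" for s using pos1[of s] by (simp add: g_def)
  have gpos: "g s > 0" for s using pos1[of s] by (simp add: g_def)
  have gder: "(g has_field_derivative g' s) (at s within {0..1})" for s
  proof -
    have "(g has_field_derivative (inverse (sqrt (b + d * s\<^sup>2)) / 2 * (d * (2 * s))))  (at s)"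
      unfolding g_def using pos1[of s]
      by (auto intro!: derivative_eq_intros)
    moreover have "inverse (sqrt (b + d * s\<^sup>2)) / 2 * (d * (2 * s)) = g' s"
      by (simp add: g'_def field_simps)
    ultimately show ?thesis by (simp add: has_field_derivative_at_within)
  qed
  have ginj: "inj_on g {0..1}"
  proof (rule inj_onI)
    fix s t :: real assume st: "s \<in> {0..1}" "t \<in> {0..1}" "g s = g t"
    hence "(g s)\<^sup>2 = (g t)\<^sup>2" by simp
    hence "s\<^sup>2 = t\<^sup>2" using d by (simp add: gsq)
    thus "s = t" using st by (simp add: power2_eq_iff_nonneg)
  qed
  have yeq: "y = sqrt (b + d)" using assms(3) by (simp add: d_def)
  have gimg: "g ` {0..1} = {sqrt b..y}"
  proof
    show "g ` {0..1} \<subseteq> {sqrt b..y}"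
    proof
      fix u assume "u \<in> g ` {0..1}"
      then obtain s where s: "s \<in> {0..1}" "u = g s" by auto
      have "s\<^sup>2 \<le> 1" using s by (simp add: power_le_one)
      hence "d * s\<^sup>2 \<le> d" using d by (simp add: mult_left_le)
      moreover have "d * s\<^sup>2 \<ge> 0" using d by simp
      ultimately show "u \<in> {sqrt b..y}" using s by (simp add: g_def yeq)
    qed
  next
    show "{sqrt b..y} \<subseteq> g ` {0..1}"
    proof
      fix u assume u: "u \<in> {sqrt b..y}"
      have u0: "u \<ge> 0" using u assms(2) by (meson atLeastAtMost_iff order.trans real_sqrt_ge_zero less_imp_le)
      have "(sqrt b)\<^sup>2 \<le> u\<^sup>2" using u assms(2) by (intro power_mono) auto
      hence ub: "b \<le> u\<^sup>2" using assms(2) by simp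
      have "u\<^sup>2 \<le> y\<^sup>2" using u u0 by (intro power_mono) auto
      hence uy: "u\<^sup>2 - b \<le> d" by (simp add: d_def)
      define s where "s = sqrt ((u\<^sup>2 - b) / d)"
      have "s\<^sup>2 = (u\<^sup>2 - b) / d" unfolding s_def using ub d by simp
      hence "g s = u" unfolding g_def using d u0 by simp
      moreover have "s \<in> {0..1}" unfolding s_def using ub uy d by auto
      ultimately show "u \<in> g ` {0..1}" by blast
    qed
  qed
  have comp: "\<bar>g' s\<bar> * f (g s) = h s" if "s \<in> {0..1} - {0}" for s
  proof -
    have s: "s > 0" "s \<le> 1" using that by auto
    have a1: "a - (g s)\<^sup>2 = A - d * s\<^sup>2" by (simp add: gsq A_def)
    have a2: "(g s)\<^sup>2 - b = d * s\<^sup>2" by (simp add: gsq)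
    have a3: "(g s)\<^sup>2 - c = B + d * s\<^sup>2" by (simp add: gsq B_def)
    have sq: "sqrt ((A - d * s\<^sup>2) * (d * s\<^sup>2) * (B + d * s\<^sup>2))
        = sqrt (A - d * s\<^sup>2) * sqrt d * s * sqrt (B + d * s\<^sup>2)"
      using s by (simp add: real_sqrt_mult)
    have gg: "g s * g s = b + d * s\<^sup>2" using gsq[of s] by (simp add: power2_eq_square)
    have "\<bar>g' s\<bar> = d * s / g s" using s d pos1[of s] by (simp add: g'_def g_def)
    hence "\<bar>g' s\<bar> * f (g s) = d * s / g s * (1 / (g s * (sqrt (A - d * s\<^sup>2) * sqrt d * s * sqrt (B + d * s\<^sup>2))))"
      by (simp add: f_def a1 a2 a3 sq)
    also have "\<dots> = (sqrt d * sqrt d) * s / ((g s * g s) * sqrt (A - d * s\<^sup>2) * sqrt d * s * sqrt (B + d * s\<^sup>2))"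
      using d by simp
    also have "\<dots> = h s"
    proof -
      have gen: "(q * q) * s / (G * X * q * s * Y) = q / (G * X * Y)" if "q \<noteq> 0" "s \<noteq> 0" for q G X Y :: real
        using that by (simp add: field_simps)
      show ?thesis unfolding h_def gg using gen[of "sqrt d"] s d by simp
    qed
    finally show ?thesis .
  qed
  have LHS: "(f has_integral Ih) {sqrt b..y}"
  proof -
    have "(\<lambda>s. \<bar>g' s\<bar> * f (g s)) absolutely_integrable_on {0..1} \<and>
          integral {0..1} (\<lambda>s. \<bar>g' s\<bar> * f (g s)) = Ih"
    proof
      show "(\<lambda>s. \<bar>g' s\<bar> * f (g s)) absolutely_integrable_on {0..1}"
        by (rule absolutely_integrable_spike[OF habs, of "{0}"]) (use comp in auto)
      show "integral {0..1} (\<lambda>s. \<bar>g' s\<bar> * f (g s)) = Ih"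
        unfolding Ih_def by (rule integral_spike[of "{0}"]) (use comp in auto)
    qed
    hence "f absolutely_integrable_on (g ` {0..1}) \<and> integral (g ` {0..1}) f = Ih"
      using has_absolute_integral_change_of_variables_1'[of "{0..1}" g g' f Ih] gder ginj by auto
    thus ?thesis unfolding gimg
      by (metis absolutely_integrable_on_def has_integral_integral)
  qed
  define bs where "bs = (\<lambda>i. [1, 1/2, 1/2] ! i :: real)"
  define xs where "xs = (\<lambda>i. [- (y\<^sup>2 - b) / b, (y\<^sup>2 - b) / (a - b), - (y\<^sup>2 - b) / (b - c)] ! i)"
  define L where "L = (\<lambda>u::real. u powr (1/2 - 1) * (1 - u) powr (3/2 - 1/2 - 1) *
        (\<Prod>i<3. (1 - xs i * u) powr (- bs i)))"
  have lau: "lauricella_FD 3 (1/2) bs (3/2) xs = Gamma (3/2) / (Gamma (1/2) * Gamma (3/2 - 1/2)) * integral {0..1} L"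
    by (simp only: lauricella_FD_def L_def)
  have G32: "Gamma (3/2::real) = 1/2 * Gamma (1/2)"
  proof -
    have "(1/2::real) \<notin> \<int>\<^sub>\<le>\<^sub>0" using nonpos_Ints_nonpos by force
    from Gamma_plus1[OF this] show ?thesis by simp
  qed
  have G12: "Gamma (1/2::real) \<noteq> 0" by (rule less_imp_neq[symmetric], rule Gamma_real_pos) simp
  have gam: "Gamma (3/2) / (Gamma (1/2) * Gamma (3/2 - 1/2)) = (1/2::real)"
    using G12 by (simp add: G32)
  have prodeq: "(\<Prod>i<3. (1 - xs i * t) powr (- bs i)) =
      (1 + d * t / b) powr (-1) * (1 - d * t / A) powr (-1/2) * (1 + d * t / B) powr (-1/2)" for t
  proof -
    have F: "(\<Prod>i<3. G i) = G 0 * G 1 * G 2" for G :: "nat \<Rightarrow> real"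
      by (simp add: numeral_3_eq_3 numeral_2_eq_2 lessThan_Suc mult_ac)
    have x0: "1 - xs 0 * t = 1 + d * t / b" using assms(2) by (simp add: xs_def d_def field_simps)
    have x1: "1 - xs 1 * t = 1 - d * t / A" by (simp add: xs_def d_def A_def)
    have x2: "1 - xs 2 * t = 1 + d * t / B" using assms(1) by (simp add: xs_def d_def B_def numeral_2_eq_2 field_simps)
    have b0: "bs 0 = 1" "bs 1 = 1/2" "bs 2 = 1/2" by (simp_all add: bs_def numeral_2_eq_2)
    show ?thesis unfolding F x0 x1 x2 b0 by simp
  qed
  have pm1: "x powr (-1) = 1 / x" if "x > 0" for x :: real
    using that by (simp add: powr_minus_divide)
  have pmh: "x powr (-1/2) = 1 / sqrt x" if "x > 0" for x :: real
    using that by (simp add: powr_minus_divide powr_half_sqrt)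
  define C where "C = 2 * b * sqrt A * sqrt B / sqrt d"
  have comp2: "\<bar>2 * s\<bar> * L (s\<^sup>2) = C * h s" if "s \<in> {0..1} - {0, 1}" for s
  proof -
    have s: "s > 0" "s < 1" using that by auto
    have s2: "s\<^sup>2 < 1" using s by (simp add: power_less_one_iff abs_less_iff)
    have p2: "A - d * s\<^sup>2 > 0" using pos2[of s] s by simp
    have e1: "1 + d * s\<^sup>2 / b = (b + d * s\<^sup>2) / b" using assms(2) by (simp add: field_simps)
    have e2: "1 - d * s\<^sup>2 / A = (A - d * s\<^sup>2) / A" using A by (simp add: field_simps)
    have e3: "1 + d * s\<^sup>2 / B = (B + d * s\<^sup>2) / B" using B by (simp add: field_simps)
    have "L (s\<^sup>2) = (s\<^sup>2) powr (-1/2) * (1 + d * s\<^sup>2 / b) powr (-1) * (1 - d * s\<^sup>2 / A) powr (-1/2) * (1 + d * s\<^sup>2 / B) powr (-1/2)"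
      unfolding L_def prodeq using s2 by simp
    also have "\<dots> = (1 / s) * (b / (b + d * s\<^sup>2)) * (sqrt A / sqrt (A - d * s\<^sup>2)) * (sqrt B / sqrt (B + d * s\<^sup>2))"
    proof -
      have h1: "(s\<^sup>2) powr (-1/2) = 1 / s" using s pmh[of "s\<^sup>2"] by simp
      have h2: "((b + d * s\<^sup>2) / b) powr (-1) = b / (b + d * s\<^sup>2)"
        using pos1[of s] assms(2) pm1[of "(b + d * s\<^sup>2) / b"] by simp
      have h3: "((A - d * s\<^sup>2) / A) powr (-1/2) = sqrt A / sqrt (A - d * s\<^sup>2)"
        using p2 A pmh[of "(A - d * s\<^sup>2) / A"] by (simp add: real_sqrt_divide)
      have h4: "((B + d * s\<^sup>2) / B) powr (-1/2) = sqrt B / sqrt (B + d * s\<^sup>2)"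
        using pos3[of s] B pmh[of "(B + d * s\<^sup>2) / B"] by (simp add: real_sqrt_divide)
      show ?thesis unfolding e1 e2 e3 h1 h2 h3 h4 ..
    qed
    finally have "L (s\<^sup>2) = (1 / s) * (b / (b + d * s\<^sup>2)) * (sqrt A / sqrt (A - d * s\<^sup>2)) * (sqrt B / sqrt (B + d * s\<^sup>2))" .
    moreover have gen: "\<bar>2 * s\<bar> * (1 / s * (b / P) * (sa / X) * (sb / Y)) = (2 * b * sa * sb / q) * (q / (P * X * Y))"
      if "P \<noteq> 0" "X \<noteq> 0" "Y \<noteq> 0" "q \<noteq> 0" for P X Y sa sb q :: real
      using that s by (simp add: field_simps)
    moreover have "sqrt (A - d * s\<^sup>2) \<noteq> 0" "sqrt (B + d * s\<^sup>2) \<noteq> 0" "sqrt d \<noteq> 0" "b + d * s\<^sup>2 \<noteq> 0"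
      using p2 pos3[of s] pos1[of s] d by auto
    ultimately show ?thesis unfolding C_def h_def by simp
  qed
  have Lint: "integral {0..1} L = C * Ih"
  proof -
    have Chabs: "(\<lambda>s. C * h s) absolutely_integrable_on {0..1}"
      by (rule absolutely_integrable_continuous_real) (intro continuous_intros hcont)
    have "(\<lambda>s. \<bar>2 * s\<bar> * L (s\<^sup>2)) absolutely_integrable_on {0..1} \<and>
          integral {0..1} (\<lambda>s. \<bar>2 * s\<bar> * L (s\<^sup>2)) = C * Ih"
    proof
      show "(\<lambda>s. \<bar>2 * s\<bar> * L (s\<^sup>2)) absolutely_integrable_on {0..1}"
        by (rule absolutely_integrable_spike[OF Chabs, of "{0,1}"]) (use comp2 in auto)
      have "integral {0..1} (\<lambda>s. \<bar>2 * s\<bar> * L (s\<^sup>2)) = integral {0..1} (\<lambda>s. C * h s)"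
        by (rule integral_spike[of "{0,1}"]) (use comp2 in auto)
      also have "\<dots> = C * Ih" unfolding Ih_def by simp
      finally show "integral {0..1} (\<lambda>s. \<bar>2 * s\<bar> * L (s\<^sup>2)) = C * Ih" .
    qed
    moreover have "((\<lambda>s::real. s\<^sup>2) has_field_derivative 2 * s) (at s within {0..1})" for s
      by (auto intro!: derivative_eq_intros)
    moreover have "inj_on (\<lambda>s::real. s\<^sup>2) {0..1}"
      by (auto intro!: inj_onI simp: power2_eq_iff_nonneg)
    ultimately have "L absolutely_integrable_on ((\<lambda>s::real. s\<^sup>2) ` {0..1}) \<and> integral ((\<lambda>s::real. s\<^sup>2) ` {0..1}) L = C * Ih"
      using has_absolute_integral_change_of_variables_1'[of "{0..1}" "\<lambda>s. s\<^sup>2" "\<lambda>s. 2 * s" L "C * Ih"]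
      by auto
    moreover have "(\<lambda>s::real. s\<^sup>2) ` {0..1} = {0..1}"
    proof
      show "(\<lambda>s::real. s\<^sup>2) ` {0..1} \<subseteq> {0..1}" by (auto simp: power_le_one)
      show "{0..1} \<subseteq> (\<lambda>s::real. s\<^sup>2) ` {0..1}"
      proof
        fix t :: real assume t: "t \<in> {0..1}"
        hence "t = (sqrt t)\<^sup>2" "sqrt t \<in> {0..1}" by auto
        thus "t \<in> (\<lambda>s::real. s\<^sup>2) ` {0..1}" by blast
      qed
    qed
    ultimately show ?thesis by simp
  qed
  have final: "1 / b * sqrt (d / (A * B)) * (1/2 * (C * Ih)) = Ih"
    unfolding C_def using d A B assms(2) by (simp add: real_sqrt_divide real_sqrt_mult field_simps)
  have "1 / b * sqrt ((y\<^sup>2 - b) / ((a - b) * (b - c))) * lauricella_FD 3 (1/2) bs (3/2) xs = Ih"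
    unfolding lau gam Lint using final by (simp add: d_def A_def B_def)
  thus ?thesis using LHS unfolding f_def bs_def xs_def by simp
qed

end
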